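(* For every $\mathcal{C}$-orderable group $G$, the intersection of any family of $\mathcal{C}$-relatively convex subgroups of $G$ is $\mathcal{C}$-relatively convex.
   Context: A $\mathcal{C}$-ordering is a total order $\preceq$ on $G$ invariant under left multiplication such that for all $f\succ id$, $g\succ id$ there is $n\in\mathbb{N}$ with $fg^n\succ g$. A subgroup $H$ is convex for $\preceq$ if $f_1\prec h\prec f_2$ with $f_1,f_2\in H$ implies $h\in H$; $H$ is $\mathcal{C}$-relatively convex if there is a $\mathcal{C}$-ordering of $G$ for which $H$ is convex. *)

theory Defs
  imports "HOL-Algebra.Group"
begin

definition C_ordering :: "('a, 'b) monoid_scheme \<Rightarrow> ('a \<Rightarrow> 'a \<Rightarrow> bool) \<Rightarrow> bool" where
  "C_ordering G R \<longleftrightarrow>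
     (\<forall>x\<in>carrier G. R x x) \<and>
     (\<forall>x\<in>carrier G. \<forall>y\<in>carrier G. R x y \<and> R y x \<longrightarrow> x = y) \<and>
     (\<forall>x\<in>carrier G. \<forall>y\<in>carrier G. \<forall>z\<in>carrier G. R x y \<and> R y z \<longrightarrow> R x z) \<and>
     (\<forall>x\<in>carrier G. \<forall>y\<in>carrier G. R x y \<or> R y x) \<and>
     (\<forall>f\<in>carrier G. \<forall>x\<in>carrier G. \<forall>y\<in>carrier G.
        R x y \<longrightarrow> R (f \<otimes>\<^bsub>G\<^esub> x) (f \<otimes>\<^bsub>G\<^esub> y)) \<and>
     (\<forall>f\<in>carrier G. \<forall>g\<in>carrier G.
        (R \<one>\<^bsub>G\<^esub> f \<and> f \<noteq> \<one>\<^bsub>G\<^esub>) \<and> (R \<one>\<^bsub>G\<^esub> g \<and> g \<noteq> \<one>\<^bsub>G\<^esub>) \<longrightarrow>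
        (\<exists>n::nat. R g (f \<otimes>\<^bsub>G\<^esub> (g [^]\<^bsub>G\<^esub> n)) \<and> f \<otimes>\<^bsub>G\<^esub> (g [^]\<^bsub>G\<^esub> n) \<noteq> g))"

definition C_orderable :: "('a, 'b) monoid_scheme \<Rightarrow> bool" where
  "C_orderable G \<longleftrightarrow> (\<exists>R. C_ordering G R)"

definition convex_for :: "('a, 'b) monoid_scheme \<Rightarrow> ('a \<Rightarrow> 'a \<Rightarrow> bool) \<Rightarrow> 'a set \<Rightarrow> bool" where
  "convex_for G R H \<longleftrightarrow>
     (\<forall>f1\<in>H. \<forall>f2\<in>H. \<forall>h\<in>carrier G.
        (R f1 h \<and> f1 \<noteq> h) \<and> (R h f2 \<and> h \<noteq> f2) \<longrightarrow> h \<in> H)"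

definition C_relatively_convex :: "('a, 'b) monoid_scheme \<Rightarrow> 'a set \<Rightarrow> bool" where
  "C_relatively_convex G H \<longleftrightarrow> subgroup H G \<and> (\<exists>R. C_ordering G R \<and> convex_for G R H)"

end

theory Submission
  imports Defs
begin

definition slt :: "('a \<Rightarrow> 'a \<Rightarrow> bool) \<Rightarrow> 'a \<Rightarrow> 'a \<Rightarrow> bool" where
  "slt R x y \<longleftrightarrow> R x y \<and> x \<noteq> y"

lemma sub_pow: "group G \<Longrightarrow> subgroup H G \<Longrightarrow> x \<in> H \<Longrightarrow> x [^]\<^bsub>G\<^esub> (n::nat) \<in> H"
proof (induction n)
  case 0 then show ?case using subgroup.one_closed by simp
next
  case (Suc n) then show ?case using subgroup.m_closed[of H G "x [^]\<^bsub>G\<^esub> n" x] by simp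
qed

locale corder = group G for G (structure) + fixes R assumes co: "C_ordering G R"
begin

lemmas cd = co[unfolded C_ordering_def]

lemma Rrefl: "x \<in> carrier G \<Longrightarrow> R x x" by (metis cd[THEN conjunct1, rule_format])
lemma Rantisym: "x\<in>carrier G \<Longrightarrow> y\<in>carrier G \<Longrightarrow> R x y \<Longrightarrow> R y x \<Longrightarrow> x = y"
  by (metis cd[THEN conjunct2, THEN conjunct1, rule_format])
lemma Rtrans: "x\<in>carrier G \<Longrightarrow> y\<in>carrier G \<Longrightarrow> z\<in>carrier G \<Longrightarrow> R x y \<Longrightarrow> R y z \<Longrightarrow> R x z"
  by (metis cd[THEN conjunct2, THEN conjunct2, THEN conjunct1, rule_format])
lemma Rtotal: "x\<in>carrier G \<Longrightarrow> y\<in>carrier G \<Longrightarrow> R x y \<or> R y x"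
  by (metis cd[THEN conjunct2, THEN conjunct2, THEN conjunct2, THEN conjunct1, rule_format])
lemma linv: "f\<in>carrier G \<Longrightarrow> x\<in>carrier G \<Longrightarrow> y\<in>carrier G \<Longrightarrow> R x y \<Longrightarrow> R (f\<otimes>x) (f\<otimes>y)"
  by (metis cd[THEN conjunct2, THEN conjunct2, THEN conjunct2, THEN conjunct2, THEN conjunct1, rule_format])
lemma conrad: "f\<in>carrier G \<Longrightarrow> g\<in>carrier G \<Longrightarrow> slt R \<one> f \<Longrightarrow> slt R \<one> g \<Longrightarrow>
   \<exists>n::nat. slt R g (f\<otimes>g[^]n)"
  unfolding slt_def by (metis cd[THEN conjunct2, THEN conjunct2, THEN conjunct2, THEN conjunct2, THEN conjunct2, rule_format])

lemma lt_mult: "f\<in>carrier G \<Longrightarrow> x\<in>carrier G \<Longrightarrow> y\<in>carrier G \<Longrightarrow> slt R x y \<Longrightarrow> slt R (f\<otimes>x) (f\<otimes>y)"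
  unfolding slt_def using linv by (metis Units_eq Units_l_cancel)

lemma lt_mult_iff: "f\<in>carrier G \<Longrightarrow> x\<in>carrier G \<Longrightarrow> y\<in>carrier G \<Longrightarrow> slt R (f\<otimes>x) (f\<otimes>y) \<longleftrightarrow> slt R x y"
proof
  assume a: "f\<in>carrier G" "x\<in>carrier G" "y\<in>carrier G" "slt R (f\<otimes>x) (f\<otimes>y)"
  have "slt R (inv f \<otimes> (f\<otimes>x)) (inv f \<otimes> (f\<otimes>y))" using a lt_mult by simp
  then show "slt R x y" using a by (simp add: m_assoc[symmetric])
qed (rule lt_mult)

lemma lt_trans: "x\<in>carrier G \<Longrightarrow> y\<in>carrier G \<Longrightarrow> z\<in>carrier G \<Longrightarrow> slt R x y \<Longrightarrow> slt R y z \<Longrightarrow> slt R x z"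
proof -
  assume a: "x\<in>carrier G" "y\<in>carrier G" "z\<in>carrier G" "slt R x y" "slt R y z"
  have "R x z" using Rtrans[of x y z] a unfolding slt_def by blast
  moreover have "x \<noteq> z"
  proof
    assume "x = z"
    then have "R y x" using a unfolding slt_def by simp
    then have "x = y" using Rantisym[of x y] a unfolding slt_def by blast
    then show False using a unfolding slt_def by simp
  qed
  ultimately show ?thesis unfolding slt_def by blast
qed
lemma lt_total: "x\<in>carrier G \<Longrightarrow> y\<in>carrier G \<Longrightarrow> x \<noteq> y \<Longrightarrow> slt R x y \<or> slt R y x"
  unfolding slt_def using Rtotal by blast
lemma lt_asym: "x\<in>carrier G \<Longrightarrow> y\<in>carrier G \<Longrightarrow> slt R x y \<Longrightarrow> \<not> slt R y x"
  unfolding slt_def using Rantisym by blast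

lemma pos_iff: "g\<in>carrier G \<Longrightarrow> w\<in>carrier G \<Longrightarrow> slt R g w \<longleftrightarrow> slt R \<one> (inv g \<otimes> w)"
  using lt_mult_iff[of "inv g" g w] by simp

lemma neg_inv: "x\<in>carrier G \<Longrightarrow> slt R \<one> x \<Longrightarrow> slt R (inv x) \<one>"
  using lt_mult[of "inv x" \<one> x] by simp
lemma inv_pos: "x\<in>carrier G \<Longrightarrow> slt R x \<one> \<Longrightarrow> slt R \<one> (inv x)"
  using lt_mult[of "inv x" x \<one>] by simp

end

locale cvx = corder + fixes H assumes sub: "subgroup H G" and cv: "convex_for G R H"
begin

lemma Hc: "h \<in> H \<Longrightarrow> h \<in> carrier G" using sub subgroup.subset by blast

lemma convex: "f1\<in>H \<Longrightarrow> f2\<in>H \<Longrightarrow> h\<in>carrier G \<Longrightarrow> slt R f1 h \<Longrightarrow> slt R h f2 \<Longrightarrow> h\<in>H"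
  using cv unfolding convex_for_def slt_def by blast

lemma above: "x\<in>carrier G \<Longrightarrow> x\<notin>H \<Longrightarrow> slt R \<one> x \<Longrightarrow> h\<in>H \<Longrightarrow> slt R h x"
  by (metis Hc convex lt_total sub subgroup.one_closed)

lemma below: "x\<in>carrier G \<Longrightarrow> x\<notin>H \<Longrightarrow> slt R x \<one> \<Longrightarrow> h\<in>H \<Longrightarrow> slt R x h"
  by (metis Hc convex lt_total sub subgroup.one_closed)

lemma left: "x\<in>carrier G \<Longrightarrow> x\<notin>H \<Longrightarrow> slt R \<one> x \<Longrightarrow> a\<in>H \<Longrightarrow> slt R \<one> (a\<otimes>x)"
proof -
  assume a: "x\<in>carrier G" "x\<notin>H" "slt R \<one> x" "a\<in>H"
  have ac: "a \<in> carrier G" using Hc[OF a(4)] .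
  have "inv a \<in> H" using subgroup.m_inv_closed[OF sub a(4)] .
  then have "slt R (inv a) x" using above[OF a(1) a(2) a(3)] by blast
  then have "slt R (a \<otimes> inv a) (a \<otimes> x)" using lt_mult[OF ac _ a(1)] ac by blast
  then show ?thesis using ac by simp
qed

lemma notin: "x\<in>carrier G \<Longrightarrow> x\<notin>H \<Longrightarrow> a\<in>H \<Longrightarrow> b\<in>H \<Longrightarrow> a\<otimes>x\<otimes>b \<notin> H"
proof
  assume a: "x\<in>carrier G" "x\<notin>H" "a\<in>H" "b\<in>H" "a\<otimes>x\<otimes>b \<in> H"
  have ac: "a \<in> carrier G" "b \<in> carrier G" using Hc a by auto
  have "inv a \<otimes> (a\<otimes>x\<otimes>b) \<in> H"
    using subgroup.m_closed[OF sub subgroup.m_inv_closed[OF sub a(3)] a(5)] .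
  then have "inv a \<otimes> (a\<otimes>x\<otimes>b) \<otimes> inv b \<in> H"
    using subgroup.m_closed[OF sub _ subgroup.m_inv_closed[OF sub a(4)]] by blast
  moreover have "inv a \<otimes> (a\<otimes>x\<otimes>b) = x \<otimes> b" using ac a(1) by (simp add: m_assoc[symmetric])
  moreover have "x \<otimes> b \<otimes> inv b = x" using ac a(1) by (simp add: m_assoc)
  ultimately show False using a(2) by simp
qed

lemma right: "x\<in>carrier G \<Longrightarrow> x\<notin>H \<Longrightarrow> slt R \<one> x \<Longrightarrow> b\<in>H \<Longrightarrow> slt R \<one> (x\<otimes>b)"
proof (rule ccontr)
  assume a: "x\<in>carrier G" "x\<notin>H" "slt R \<one> x" "b\<in>H" "\<not> slt R \<one> (x\<otimes>b)"
  have bc: "b \<in> carrier G" using a Hc by blast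
  have yn: "x\<otimes>b \<notin> H" using notin[of x \<one> b] a sub subgroup.one_closed bc by fastforce
  have "x\<otimes>b \<noteq> \<one>" using yn sub subgroup.one_closed by fastforce
  then have "slt R (x\<otimes>b) \<one>" using a lt_total bc by blast
  then have p: "slt R \<one> (inv (x\<otimes>b))" using inv_pos a bc by blast
  have ni: "inv (x\<otimes>b) \<notin> H" using yn sub a bc
    by (metis inv_inv m_closed subgroup.m_inv_closed)
  have "inv (x\<otimes>b) = inv b \<otimes> inv x" using a bc by (simp add: inv_mult_group)
  then have "slt R \<one> (inv b \<otimes> inv x)" using p by simp
  then have "slt R (b\<otimes>\<one>) (b \<otimes> (inv b \<otimes> inv x))" using lt_mult[of b \<one> "inv b \<otimes> inv x"] a bc by simp
  then have l1: "slt R b (inv x)" using a bc by (simp add: m_assoc[symmetric])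
  have "slt R (inv x) \<one>" using neg_inv a by blast
  moreover have "inv x \<notin> H" using a sub by (metis inv_inv subgroup.m_inv_closed)
  ultimately have "slt R (inv x) b" using below a by simp
  then show False using l1 lt_asym a bc by blast
qed

lemma L: "g\<in>carrier G \<Longrightarrow> g\<notin>H \<Longrightarrow> slt R \<one> g \<Longrightarrow> f\<in>carrier G \<Longrightarrow> slt R \<one> f \<Longrightarrow>
   \<exists>n::nat. slt R \<one> (inv g \<otimes> (f\<otimes>g[^]n)) \<and> inv g \<otimes> (f\<otimes>g[^]n) \<notin> H"
proof -
  assume a: "g\<in>carrier G" "g\<notin>H" "slt R \<one> g" "f\<in>carrier G" "slt R \<one> f"
  obtain n::nat where n: "slt R g (f\<otimes>g[^]n)" using conrad[OF a(4) a(1) a(5) a(3)] by blast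
  have p: "slt R \<one> (inv g \<otimes> (f\<otimes>g[^]n))" using pos_iff[of g "f\<otimes>g[^]n"] n a by simp
  show ?thesis
  proof (cases "inv g \<otimes> (f\<otimes>g[^]n) \<in> H")
    case False then show ?thesis using p by blast
  next
    case True
    define h where "h = inv g \<otimes> (f\<otimes>g[^]n)"
    have hc: "h \<in> carrier G" using h_def a by simp
    have "g \<otimes> h = f\<otimes>g[^]n" using a by (simp add: h_def m_assoc[symmetric])
    then have "inv g \<otimes> (f\<otimes>g[^]Suc n) = inv g \<otimes> (g \<otimes> h \<otimes> g)" using a by (simp add: m_assoc)
    also have "\<dots> = h \<otimes> g" using a hc by (simp add: m_assoc[symmetric])
    finally have e: "inv g \<otimes> (f\<otimes>g[^]Suc n) = h \<otimes> g" .
    have hH: "h \<in> H" using True h_def by simp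
    have "slt R \<one> (h \<otimes> g)" using left[OF a(1) a(2) a(3) hH] .
    moreover have "h \<otimes> g \<otimes> \<one> \<notin> H" using notin[OF a(1) a(2) hH subgroup.one_closed[OF sub]] .
    then have "h \<otimes> g \<notin> H" using hc a(1) by simp
    ultimately have "slt R \<one> (inv g \<otimes> (f\<otimes>g[^]Suc n)) \<and> inv g \<otimes> (f\<otimes>g[^]Suc n) \<notin> H"
      unfolding e by blast
    then show ?thesis by blast
  qed
qed

lemma L2: "g\<in>carrier G \<Longrightarrow> g\<notin>H \<Longrightarrow> slt R \<one> g \<Longrightarrow> f\<in>H \<Longrightarrow>
   \<exists>n::nat. slt R \<one> (inv g \<otimes> (f\<otimes>g[^]n)) \<and> inv g \<otimes> (f\<otimes>g[^]n) \<notin> H"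
proof -
  assume a: "g\<in>carrier G" "g\<notin>H" "slt R \<one> g" "f\<in>H"
  have fc: "f \<in> carrier G" using a Hc by blast
  have "slt R \<one> (f \<otimes> g)" using left[OF a(1) a(2) a(3) a(4)] .
  then obtain n::nat where n: "slt R \<one> (inv g \<otimes> ((f\<otimes>g)\<otimes>g[^]n)) \<and> inv g \<otimes> ((f\<otimes>g)\<otimes>g[^]n) \<notin> H"
    using L[OF a(1) a(2) a(3) _] a(1) fc by blast
  moreover have "(f\<otimes>g)\<otimes>g[^]n = f\<otimes>g[^]Suc n" using a fc
    using nat_pow_Suc2[of g n] by (simp add: m_assoc del: nat_pow_Suc)
  ultimately have "slt R \<one> (inv g \<otimes> (f\<otimes>g[^]Suc n)) \<and> inv g \<otimes> (f\<otimes>g[^]Suc n) \<notin> H" by simp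
  then show ?thesis by blast
qed

end


locale comb = group G for G (structure) +
  fixes Hs :: "'a set set" and Rs :: "'a set \<Rightarrow> 'a \<Rightarrow> 'a \<Rightarrow> bool"
    and R0 :: "'a \<Rightarrow> 'a \<Rightarrow> bool" and lw :: "'a set \<Rightarrow> 'a set \<Rightarrow> bool"
  assumes cv: "\<And>H. H\<in>Hs \<Longrightarrow> cvx G (Rs H) H"
  and c0: "corder G R0"
  and lw_irr: "\<not> lw H H"
  and lw_trans: "lw a b \<Longrightarrow> lw b c \<Longrightarrow> lw a c"
  and lw_tot: "a\<in>Hs \<Longrightarrow> b\<in>Hs \<Longrightarrow> a\<noteq>b \<Longrightarrow> lw a b \<or> lw b a"
  and lw_min: "S \<subseteq> Hs \<Longrightarrow> S \<noteq> {} \<Longrightarrow> \<exists>m\<in>S. \<forall>s\<in>S. \<not> lw s m"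
begin

sublocale Z: corder G R0 by (rule c0)

definition "K = carrier G \<inter> \<Inter>Hs"
definition "mn x H \<longleftrightarrow> H\<in>Hs \<and> x\<notin>H \<and> (\<forall>H'\<in>Hs. lw H' H \<longrightarrow> x\<in>H')"
definition "P x \<longleftrightarrow> x\<in>carrier G \<and> ((x\<in>K \<and> slt R0 \<one> x) \<or> (\<exists>H. mn x H \<and> slt (Rs H) \<one> x))"
definition "Ord x y \<longleftrightarrow> x = y \<or> P (inv x \<otimes> y)"

lemma subH: "H\<in>Hs \<Longrightarrow> subgroup H G" using cv cvx.sub by blast

lemma inK: "x\<in>K \<longleftrightarrow> x\<in>carrier G \<and> (\<forall>H\<in>Hs. x\<in>H)" by (auto simp: K_def)

lemma K_sub: "subgroup K G"
proof (rule subgroup.intro)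
  show "K \<subseteq> carrier G" by (auto simp: K_def)
  show "\<And>x y. x\<in>K \<Longrightarrow> y\<in>K \<Longrightarrow> x\<otimes>y \<in> K" by (auto simp: inK dest: subH intro: subgroup.m_closed)
  show "\<one> \<in> K" by (auto simp: inK dest: subH intro: subgroup.one_closed)
  show "\<And>x. x\<in>K \<Longrightarrow> inv x \<in> K" by (auto simp: inK dest: subH intro: subgroup.m_inv_closed)
qed

lemma mn_K: "x\<in>K \<Longrightarrow> \<not> mn x H" by (auto simp: inK mn_def)

lemma mn_ex: "x\<in>carrier G \<Longrightarrow> x\<notin>K \<Longrightarrow> \<exists>H. mn x H"
proof -
  assume a: "x\<in>carrier G" "x\<notin>K"
  let ?S = "{H\<in>Hs. x\<notin>H}"
  have "?S \<noteq> {}" using a by (auto simp: inK)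
  then obtain m where m: "m\<in>?S" "\<forall>s\<in>?S. \<not> lw s m" using lw_min[of ?S] by blast
  then have "mn x m" unfolding mn_def by blast
  then show ?thesis by blast
qed

lemma mn_uniq: "mn x H1 \<Longrightarrow> mn x H2 \<Longrightarrow> H1 = H2"
  unfolding mn_def using lw_tot by blast

lemma mn_inv: "x\<in>carrier G \<Longrightarrow> mn x H \<Longrightarrow> mn (inv x) H"
  unfolding mn_def by (metis inv_inv subH subgroup.m_inv_closed)

lemma mn_left: "a\<in>K \<Longrightarrow> x\<in>carrier G \<Longrightarrow> mn x H \<Longrightarrow> mn (a\<otimes>x) H"
  unfolding mn_def inK
  by (metis cvx.notin cv l_one subH subgroup.m_closed subgroup.one_closed r_one)

lemma mn_right: "a\<in>K \<Longrightarrow> x\<in>carrier G \<Longrightarrow> mn x H \<Longrightarrow> mn (x\<otimes>a) H"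
  unfolding mn_def inK
  by (metis cvx.notin cv l_one subH subgroup.m_closed subgroup.one_closed)

lemma P_K: "x\<in>K \<Longrightarrow> P x \<longleftrightarrow> slt R0 \<one> x"
  using mn_K by (auto simp: P_def K_def)

lemma P_nK: "x\<in>carrier G \<Longrightarrow> mn x H \<Longrightarrow> P x \<longleftrightarrow> slt (Rs H) \<one> x"
  unfolding P_def using mn_K mn_uniq by blast

lemma mnK: "mn x H \<Longrightarrow> x \<notin> K" using mn_K by blast

lemma P_c: "P x \<Longrightarrow> x \<in> carrier G" by (simp add: P_def)

lemma P_ne1: "P x \<Longrightarrow> x \<noteq> \<one>"
  unfolding P_def slt_def by auto


lemma mnH: "mn x H \<Longrightarrow> H \<in> Hs" by (simp add: mn_def)

lemma coH: "H \<in> Hs \<Longrightarrow> corder G (Rs H)" using cv unfolding cvx_def by blast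

lemma P_asym: "P x \<Longrightarrow> \<not> P (inv x)"
proof
  assume a: "P x" "P (inv x)"
  have xc: "x \<in> carrier G" using a P_c by blast
  have ixc: "inv x \<in> carrier G" using xc by simp
  show False
  proof (cases "x\<in>K")
    case True
    then have iK: "inv x \<in> K" using subgroup.m_inv_closed[OF K_sub] by blast
    have p1: "slt R0 \<one> x" using a(1) P_K[OF True] by blast
    have p2: "slt R0 \<one> (inv x)" using a(2) P_K[OF iK] by blast
    have "slt R0 (inv x) \<one>" using Z.neg_inv[OF xc p1] .
    then show False using Z.lt_asym[OF ixc one_closed] p2 by blast
  next
    case False
    then obtain H where H: "mn x H" using mn_ex xc by blast
    then have H': "mn (inv x) H" using mn_inv xc by blast
    have hH: "corder G (Rs H)" using coH[OF mnH[OF H]] .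
    have p1: "slt (Rs H) \<one> x" using a(1) P_nK[OF xc H] by blast
    have p2: "slt (Rs H) \<one> (inv x)" using a(2) P_nK[OF ixc H'] by blast
    have "slt (Rs H) (inv x) \<one>" using corder.neg_inv[OF hH xc p1] .
    then show False using corder.lt_asym[OF hH ixc one_closed] p2 by blast
  qed
qed

lemma P_tot: "x\<in>carrier G \<Longrightarrow> x \<noteq> \<one> \<Longrightarrow> P x \<or> P (inv x)"
proof -
  assume xc: "x\<in>carrier G" and n1: "x \<noteq> \<one>"
  have ixc: "inv x \<in> carrier G" using xc by simp
  show ?thesis
  proof (cases "x\<in>K")
    case True
    then have iK: "inv x \<in> K" using subgroup.m_inv_closed[OF K_sub] by blast
    have "slt R0 \<one> x \<or> slt R0 x \<one>" using Z.lt_total[OF one_closed xc] n1 by blast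
    moreover have "slt R0 x \<one> \<Longrightarrow> slt R0 \<one> (inv x)" using Z.inv_pos[OF xc] .
    ultimately have "slt R0 \<one> x \<or> slt R0 \<one> (inv x)" by blast
    then show ?thesis using P_K[OF True] P_K[OF iK] by blast
  next
    case False
    then obtain H where H: "mn x H" using mn_ex xc by blast
    then have H': "mn (inv x) H" using mn_inv xc by blast
    have oA: "corder G (Rs H)" using coH[OF mnH[OF H]] .
    have "slt (Rs H) \<one> x \<or> slt (Rs H) x \<one>" using corder.lt_total[OF oA one_closed xc] n1 by blast
    moreover have "slt (Rs H) x \<one> \<Longrightarrow> slt (Rs H) \<one> (inv x)" using corder.inv_pos[OF oA xc] .
    ultimately have "slt (Rs H) \<one> x \<or> slt (Rs H) \<one> (inv x)" by blast
    then show ?thesis using P_nK[OF xc H] P_nK[OF ixc H'] by blast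
  qed
qed

lemma P_mult: assumes "P x" "P y" shows "P (x\<otimes>y)"
proof -
  have xc: "x\<in>carrier G" "y\<in>carrier G" using P_c[OF assms(1)] P_c[OF assms(2)] by auto
  consider "x\<in>K" "y\<in>K" | "x\<in>K" "y\<notin>K" | "x\<notin>K" "y\<in>K" | "x\<notin>K" "y\<notin>K" by blast
  then show ?thesis
  proof cases
    case 1
    have p1: "slt R0 \<one> x" using assms(1) P_K[OF 1(1)] by blast
    have p2: "slt R0 \<one> y" using assms(2) P_K[OF 1(2)] by blast
    have "slt R0 (x\<otimes>\<one>) (x\<otimes>y)" using Z.lt_mult[OF xc(1) one_closed xc(2) p2] .
    then have "slt R0 x (x\<otimes>y)" using xc by simp
    then have q: "slt R0 \<one> (x\<otimes>y)" using Z.lt_trans[OF one_closed xc(1) m_closed[OF xc] p1] by blast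
    have xyK: "x\<otimes>y \<in> K" using subgroup.m_closed[OF K_sub 1] .
    show ?thesis using q P_K[OF xyK] by blast
  next
    case 2
    then obtain H where H: "mn y H" using mn_ex xc by blast
    have hH: "H \<in> Hs" using mnH[OF H] .
    have cA: "cvx G (Rs H) H" using cv[OF hH] .
    have "slt (Rs H) \<one> y" using assms(2) P_nK[OF xc(2) H] by blast
    moreover have "x \<in> H" using 2 hH by (auto simp: inK)
    moreover have "y \<notin> H" using H by (simp add: mn_def)
    ultimately have "slt (Rs H) \<one> (x\<otimes>y)" using cvx.left[OF cA, of y x] xc by blast
    moreover have "mn (x\<otimes>y) H" using mn_left[OF 2(1) xc(2) H] .
    ultimately show ?thesis using P_nK[of "x\<otimes>y" H] xc by simp
  next
    case 3
    then obtain H where H: "mn x H" using mn_ex xc by blast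
    have hH: "H \<in> Hs" using mnH[OF H] .
    have cA: "cvx G (Rs H) H" using cv[OF hH] .
    have "slt (Rs H) \<one> x" using assms(1) P_nK[OF xc(1) H] by blast
    moreover have "y \<in> H" using 3 hH by (auto simp: inK)
    moreover have "x \<notin> H" using H by (simp add: mn_def)
    ultimately have "slt (Rs H) \<one> (x\<otimes>y)" using cvx.right[OF cA, of x y] xc by blast
    moreover have "mn (x\<otimes>y) H" using mn_right[OF 3(2) xc(1) H] .
    ultimately show ?thesis using P_nK[of "x\<otimes>y" H] xc by simp
  next
    case 4
    obtain Hx where Hx: "mn x Hx" using mn_ex xc 4 by blast
    obtain Hy where Hy: "mn y Hy" using mn_ex xc 4 by blast
    have px: "slt (Rs Hx) \<one> x" using assms(1) P_nK[OF xc(1) Hx] by blast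
    have py: "slt (Rs Hy) \<one> y" using assms(2) P_nK[OF xc(2) Hy] by blast
    have HxH: "Hx \<in> Hs" "Hy \<in> Hs" using mnH Hx Hy by auto
    have xn: "x \<notin> Hx" using Hx by (simp add: mn_def)
    have yn: "y \<notin> Hy" using Hy by (simp add: mn_def)
    have xl: "\<And>H'. H' \<in> Hs \<Longrightarrow> lw H' Hx \<Longrightarrow> x \<in> H'" using Hx by (simp add: mn_def)
    have yl: "\<And>H'. H' \<in> Hs \<Longrightarrow> lw H' Hy \<Longrightarrow> y \<in> H'" using Hy by (simp add: mn_def)
    consider "Hx = Hy" | "lw Hx Hy" | "lw Hy Hx" using lw_tot HxH by blast
    then show ?thesis
    proof cases
      case 1
      have cA: "cvx G (Rs Hx) Hx" using cv HxH by blast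
      have oA: "corder G (Rs Hx)" using cA unfolding cvx_def by blast
      have "slt (Rs Hx) (x\<otimes>\<one>) (x\<otimes>y)" using corder.lt_mult[OF oA, of x \<one> y] py 1 xc by simp
      then have l: "slt (Rs Hx) x (x\<otimes>y)" using xc by simp
      then have p: "slt (Rs Hx) \<one> (x\<otimes>y)" using corder.lt_trans[OF oA, of \<one> x "x\<otimes>y"] px xc by simp
      have ni: "x\<otimes>y \<notin> Hx"
      proof
        assume "x\<otimes>y \<in> Hx"
        then have "slt (Rs Hx) (x\<otimes>y) x" using cvx.above[OF cA, of x "x\<otimes>y"] xn px xc by blast
        then show False using l corder.lt_asym[OF oA, of x "x\<otimes>y"] xc by simp
      qed
      have "\<And>H'. H' \<in> Hs \<Longrightarrow> lw H' Hx \<Longrightarrow> x\<otimes>y \<in> H'"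
      proof -
        fix H' assume h: "H' \<in> Hs" "lw H' Hx"
        have "x \<in> H'" using xl[OF h] by simp
        moreover have "y \<in> H'" using yl[OF h(1)] h(2) 1 by simp
        ultimately show "x\<otimes>y \<in> H'" using subgroup.m_closed[OF subH[OF h(1)]] by blast
      qed
      then have "mn (x\<otimes>y) Hx" using ni HxH by (simp add: mn_def)
      then show ?thesis using p P_nK[of "x\<otimes>y" Hx] xc by simp
    next
      case 2
      have cA: "cvx G (Rs Hx) Hx" using cv HxH by blast
      have yH: "y \<in> Hx" using yl[OF HxH(1) 2] .
      have p: "slt (Rs Hx) \<one> (x\<otimes>y)" using cvx.right[OF cA, of x y] px xc yH xn by blast
      have "\<one> \<otimes> x \<otimes> y \<notin> Hx" using cvx.notin[OF cA, of x \<one> y] yH xc xn subgroup.one_closed[OF subH[OF HxH(1)]] by blast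
      then have ni: "x\<otimes>y \<notin> Hx" using xc by simp
      have "\<And>H'. H' \<in> Hs \<Longrightarrow> lw H' Hx \<Longrightarrow> x\<otimes>y \<in> H'"
      proof -
        fix H' assume h: "H' \<in> Hs" "lw H' Hx"
        have "x \<in> H'" using xl[OF h] by simp
        moreover have "y \<in> H'" using yl[OF h(1) lw_trans[OF h(2) 2]] .
        ultimately show "x\<otimes>y \<in> H'" using subgroup.m_closed[OF subH[OF h(1)]] by blast
      qed
      then have "mn (x\<otimes>y) Hx" using ni HxH by (simp add: mn_def)
      then show ?thesis using p P_nK[of "x\<otimes>y" Hx] xc by simp
    next
      case 3
      have cA: "cvx G (Rs Hy) Hy" using cv HxH by blast
      have xH: "x \<in> Hy" using xl[OF HxH(2) 3] .
      have p: "slt (Rs Hy) \<one> (x\<otimes>y)" using cvx.left[OF cA, of y x] py xc xH yn by blast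
      have "x \<otimes> y \<otimes> \<one> \<notin> Hy" using cvx.notin[OF cA, of y x \<one>] xH xc yn subgroup.one_closed[OF subH[OF HxH(2)]] by blast
      then have ni: "x\<otimes>y \<notin> Hy" using xc by simp
      have "\<And>H'. H' \<in> Hs \<Longrightarrow> lw H' Hy \<Longrightarrow> x\<otimes>y \<in> H'"
      proof -
        fix H' assume h: "H' \<in> Hs" "lw H' Hy"
        have "x \<in> H'" using xl[OF h(1) lw_trans[OF h(2) 3]] .
        moreover have "y \<in> H'" using yl[OF h] by simp
        ultimately show "x\<otimes>y \<in> H'" using subgroup.m_closed[OF subH[OF h(1)]] by blast
      qed
      then have "mn (x\<otimes>y) Hy" using ni HxH by (simp add: mn_def)
      then show ?thesis using p P_nK[of "x\<otimes>y" Hy] xc by simp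
    qed
  qed
qed


lemma e_in: assumes "subgroup H' G" "f \<in> H'" "g \<in> H'" shows "inv g \<otimes> (f\<otimes>g[^](n::nat)) \<in> H'"
proof -
  have "g[^]n \<in> H'" using sub_pow[OF is_group assms(1) assms(3)] .
  then have "f\<otimes>g[^]n \<in> H'" using subgroup.m_closed[OF assms(1) assms(2)] by blast
  moreover have "inv g \<in> H'" using subgroup.m_inv_closed[OF assms(1) assms(3)] .
  ultimately show ?thesis using subgroup.m_closed[OF assms(1)] by blast
qed

lemma mn_gen: assumes "H\<in>Hs" "inv g \<otimes> (f\<otimes>g[^]n) \<notin> H" "\<And>H'. H'\<in>Hs \<Longrightarrow> lw H' H \<Longrightarrow> f\<in>H' \<and> g\<in>H'"
  shows "mn (inv g \<otimes> (f\<otimes>g[^](n::nat))) H"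
proof -
  have "\<And>H'. H'\<in>Hs \<Longrightarrow> lw H' H \<Longrightarrow> inv g \<otimes> (f\<otimes>g[^](n::nat)) \<in> H'"
  proof -
    fix H' assume a: "H'\<in>Hs" "lw H' H"
    then have "f\<in>H'" "g\<in>H'" using assms(3) by auto
    then show "inv g \<otimes> (f\<otimes>g[^](n::nat)) \<in> H'" using e_in[OF subH[OF a(1)]] by blast
  qed
  then show ?thesis using assms(1,2) unfolding mn_def by blast
qed

lemma P_conr: assumes "P f" "P g" shows "\<exists>n::nat. P (inv g \<otimes> (f\<otimes>g[^]n))"
proof -
  have fc: "f\<in>carrier G" and gc: "g\<in>carrier G" using P_c[OF assms(1)] P_c[OF assms(2)] by auto
  have ec: "\<And>n::nat. inv g \<otimes> (f\<otimes>g[^]n) \<in> carrier G" using fc gc by simp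
  consider "f\<in>K" "g\<in>K" | "f\<notin>K" "g\<in>K" | "f\<in>K" "g\<notin>K" | "f\<notin>K" "g\<notin>K" by blast
  then show ?thesis
  proof cases
    case 1
    have p: "slt R0 \<one> f" "slt R0 \<one> g" using assms(1) P_K[OF 1(1)] assms(2) P_K[OF 1(2)] by blast+
    obtain n::nat where "slt R0 g (f\<otimes>g[^]n)" using Z.conrad[OF fc gc p] by blast
    then have q: "slt R0 \<one> (inv g \<otimes> (f\<otimes>g[^]n))" using Z.pos_iff[of g "f\<otimes>g[^]n"] fc gc by simp
    have eK: "inv g \<otimes> (f\<otimes>g[^]n) \<in> K" using e_in[OF K_sub 1] .
    show ?thesis using q P_K[OF eK] by blast
  next
    case 2
    then obtain H where H: "mn f H" using mn_ex fc by blast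
    have hH: "H \<in> Hs" using mnH[OF H] .
    have cA: "cvx G (Rs H) H" using cv[OF hH] .
    have "slt (Rs H) \<one> f" using assms(1) P_nK[OF fc H] by blast
    moreover have "g \<in> H" using 2(2) hH by (simp add: inK)
    then have "inv g \<in> H" using subgroup.m_inv_closed[OF subH[OF hH]] by blast
    moreover have "f \<notin> H" using H by (simp add: mn_def)
    ultimately have "slt (Rs H) \<one> (inv g \<otimes> f)" using cvx.left[OF cA, of f "inv g"] fc by blast
    moreover have "inv g \<in> K" using subgroup.m_inv_closed[OF K_sub 2(2)] .
    then have "mn (inv g \<otimes> f) H" using mn_left[OF _ fc H] by blast
    ultimately have "P (inv g \<otimes> f)" using P_nK[of "inv g \<otimes> f" H] fc gc by simp
    then have "P (inv g \<otimes> (f\<otimes>g[^](0::nat)))" using fc by simp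
    then show ?thesis by blast
  next
    case 3
    then obtain H where H: "mn g H" using mn_ex gc by blast
    have hH: "H \<in> Hs" using mnH[OF H] .
    have cA: "cvx G (Rs H) H" using cv[OF hH] .
    have "slt (Rs H) \<one> g" using assms(2) P_nK[OF gc H] by blast
    moreover have "f \<in> H" using 3 hH by (auto simp: inK)
    moreover have "g \<notin> H" using H by (simp add: mn_def)
    ultimately obtain n::nat where n: "slt (Rs H) \<one> (inv g \<otimes> (f\<otimes>g[^]n))" "inv g \<otimes> (f\<otimes>g[^]n) \<notin> H"
      using cvx.L2[OF cA, of g f] gc by blast
    have "\<And>H'. H'\<in>Hs \<Longrightarrow> lw H' H \<Longrightarrow> f\<in>H' \<and> g\<in>H'" proof -
      fix H' assume h: "H'\<in>Hs" "lw H' H"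
      have "f \<in> H'" using 3(1) h(1) by (simp add: inK)
      moreover have "g \<in> H'" using H h unfolding mn_def by blast
      ultimately show "f\<in>H' \<and> g\<in>H'" by blast
    qed
    then have "mn (inv g \<otimes> (f\<otimes>g[^]n)) H" using mn_gen[OF hH n(2)] by blast
    then show ?thesis using n(1) P_nK[OF ec] by blast
  next
    case 4
    obtain Hf where Hf: "mn f Hf" using mn_ex fc 4 by blast
    obtain Hg where Hg: "mn g Hg" using mn_ex gc 4 by blast
    have pf: "slt (Rs Hf) \<one> f" using assms(1) P_nK[OF fc Hf] by blast
    have pg: "slt (Rs Hg) \<one> g" using assms(2) P_nK[OF gc Hg] by blast
    have HH: "Hf \<in> Hs" "Hg \<in> Hs" using mnH Hf Hg by auto
    have fn: "f \<notin> Hf" using Hf by (simp add: mn_def)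
    have gn: "g \<notin> Hg" using Hg by (simp add: mn_def)
    have fl: "\<And>H'. H' \<in> Hs \<Longrightarrow> lw H' Hf \<Longrightarrow> f \<in> H'" using Hf by (simp add: mn_def)
    have gl: "\<And>H'. H' \<in> Hs \<Longrightarrow> lw H' Hg \<Longrightarrow> g \<in> H'" using Hg by (simp add: mn_def)
    consider "Hf = Hg" | "lw Hf Hg" | "lw Hg Hf" using lw_tot HH by blast
    then show ?thesis
    proof cases
      case 1
      have cA: "cvx G (Rs Hg) Hg" using cv HH by blast
      obtain n::nat where n: "slt (Rs Hg) \<one> (inv g \<otimes> (f\<otimes>g[^]n))" "inv g \<otimes> (f\<otimes>g[^]n) \<notin> Hg"
        using cvx.L[OF cA, of g f] gc fc gn pg pf 1 by blast
      have "\<And>H'. H'\<in>Hs \<Longrightarrow> lw H' Hg \<Longrightarrow> f\<in>H' \<and> g\<in>H'" using fl gl 1 by blast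
      then have "mn (inv g \<otimes> (f\<otimes>g[^]n)) Hg" using mn_gen[OF HH(2) n(2)] by blast
      then show ?thesis using n(1) P_nK[OF ec] by blast
    next
      case 2
      have cA: "cvx G (Rs Hf) Hf" using cv HH by blast
      have gH: "g \<in> Hf" using gl[OF HH(1) 2] .
      then have igH: "inv g \<in> Hf" using subgroup.m_inv_closed[OF subH[OF HH(1)]] by blast
      have p: "slt (Rs Hf) \<one> (inv g \<otimes> f)" using cvx.left[OF cA, of f "inv g"] pf fc igH fn by blast
      have "inv g \<otimes> f \<otimes> \<one> \<notin> Hf" using cvx.notin[OF cA, of f "inv g" \<one>] igH fc fn subgroup.one_closed[OF subH[OF HH(1)]] by blast
      then have ni: "inv g \<otimes> (f \<otimes> g[^](0::nat)) \<notin> Hf" using fc gc by simp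
      have "\<And>H'. H'\<in>Hs \<Longrightarrow> lw H' Hf \<Longrightarrow> f\<in>H' \<and> g\<in>H'" using fl gl lw_trans[OF _ 2] by blast
      then have "mn (inv g \<otimes> (f\<otimes>g[^](0::nat))) Hf" using mn_gen[OF HH(1) ni] by blast
      moreover have "slt (Rs Hf) \<one> (inv g \<otimes> (f\<otimes>g[^](0::nat)))" using p fc by simp
      ultimately show ?thesis using P_nK[OF ec] by blast
    next
      case 3
      have cA: "cvx G (Rs Hg) Hg" using cv HH by blast
      have fH: "f \<in> Hg" using fl[OF HH(2) 3] .
      obtain n::nat where n: "slt (Rs Hg) \<one> (inv g \<otimes> (f\<otimes>g[^]n))" "inv g \<otimes> (f\<otimes>g[^]n) \<notin> Hg"
        using cvx.L2[OF cA, of g f] gc fH gn pg by blast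
      have "\<And>H'. H'\<in>Hs \<Longrightarrow> lw H' Hg \<Longrightarrow> f\<in>H' \<and> g\<in>H'" using fl gl lw_trans[OF _ 3] by blast
      then have "mn (inv g \<otimes> (f\<otimes>g[^]n)) Hg" using mn_gen[OF HH(2) n(2)] by blast
      then show ?thesis using n(1) P_nK[OF ec] by blast
    qed
  qed
qed


lemma eq1: "x\<in>carrier G \<Longrightarrow> y\<in>carrier G \<Longrightarrow> inv (inv x \<otimes> y) = inv y \<otimes> x"
  by (simp add: inv_mult_group)

lemma eq2: "x\<in>carrier G \<Longrightarrow> y\<in>carrier G \<Longrightarrow> z\<in>carrier G \<Longrightarrow> (inv x \<otimes> y) \<otimes> (inv y \<otimes> z) = inv x \<otimes> z"
  by (simp add: m_assoc[symmetric]) (simp add: m_assoc)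

lemma eq3: "f\<in>carrier G \<Longrightarrow> x\<in>carrier G \<Longrightarrow> y\<in>carrier G \<Longrightarrow> inv (f \<otimes> x) \<otimes> (f \<otimes> y) = inv x \<otimes> y"
  by (simp add: inv_mult_group m_assoc) (simp add: m_assoc[symmetric])

lemma O2: "\<forall>x\<in>carrier G. \<forall>y\<in>carrier G. Ord x y \<and> Ord y x \<longrightarrow> x = y"
proof (intro ballI impI)
  fix x y assume c: "x\<in>carrier G" "y\<in>carrier G" and o: "Ord x y \<and> Ord y x"
  show "x = y"
  proof (rule ccontr)
    assume ne: "x \<noteq> y"
    have "P (inv x \<otimes> y)" using o ne unfolding Ord_def by blast
    moreover have "P (inv y \<otimes> x)" using o ne unfolding Ord_def by metis
    ultimately show False using P_asym[of "inv x \<otimes> y"] eq1[OF c] by simp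
  qed
qed

lemma O3: "\<forall>x\<in>carrier G. \<forall>y\<in>carrier G. \<forall>z\<in>carrier G. Ord x y \<and> Ord y z \<longrightarrow> Ord x z"
proof (intro ballI impI)
  fix x y z assume c: "x\<in>carrier G" "y\<in>carrier G" "z\<in>carrier G" and o: "Ord x y \<and> Ord y z"
  show "Ord x z"
  proof (cases "x = y \<or> y = z")
    case True then show ?thesis using o by blast
  next
    case False
    then have "P (inv x \<otimes> y)" "P (inv y \<otimes> z)" using o unfolding Ord_def by blast+
    then have "P ((inv x \<otimes> y) \<otimes> (inv y \<otimes> z))" using P_mult by blast
    then show ?thesis using eq2[OF c] unfolding Ord_def by simp
  qed
qed

lemma O4: "\<forall>x\<in>carrier G. \<forall>y\<in>carrier G. Ord x y \<or> Ord y x"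
proof (intro ballI)
  fix x y assume c: "x\<in>carrier G" "y\<in>carrier G"
  show "Ord x y \<or> Ord y x"
  proof (cases "x = y")
    case True then show ?thesis unfolding Ord_def by blast
  next
    case False
    have "x \<otimes> (inv x \<otimes> y) = y" using c by (simp add: m_assoc[symmetric])
    then have "inv x \<otimes> y \<noteq> \<one>" using c False by auto
    then have "P (inv x \<otimes> y) \<or> P (inv (inv x \<otimes> y))" using P_tot c by simp
    then have "P (inv x \<otimes> y) \<or> P (inv y \<otimes> x)" using eq1[OF c] by simp
    then show ?thesis unfolding Ord_def by blast
  qed
qed

lemma O5: "\<forall>f\<in>carrier G. \<forall>x\<in>carrier G. \<forall>y\<in>carrier G. Ord x y \<longrightarrow> Ord (f \<otimes> x) (f \<otimes> y)"
  unfolding Ord_def using eq3 by simp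

lemma O6: "\<forall>f\<in>carrier G. \<forall>g\<in>carrier G.
        (Ord \<one> f \<and> f \<noteq> \<one>) \<and> (Ord \<one> g \<and> g \<noteq> \<one>) \<longrightarrow>
        (\<exists>n::nat. Ord g (f \<otimes> (g [^] n)) \<and> f \<otimes> (g [^] n) \<noteq> g)"
proof (intro ballI impI)
  fix f g assume c: "f\<in>carrier G" "g\<in>carrier G" and a: "(Ord \<one> f \<and> f \<noteq> \<one>) \<and> (Ord \<one> g \<and> g \<noteq> \<one>)"
  have "P (inv \<one> \<otimes> f)" "P (inv \<one> \<otimes> g)" using a unfolding Ord_def by metis+
  then have "P f" "P g" using c by simp_all
  then obtain n::nat where n: "P (inv g \<otimes> (f\<otimes>g[^]n))" using P_conr by blast
  have "f\<otimes>g[^]n \<noteq> g"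
  proof
    assume "f\<otimes>g[^]n = g"
    then have "inv g \<otimes> (f\<otimes>g[^]n) = \<one>" using c by simp
    then show False using n P_ne1 by simp
  qed
  then show "\<exists>n::nat. Ord g (f \<otimes> (g [^] n)) \<and> f \<otimes> (g [^] n) \<noteq> g" using n unfolding Ord_def by blast
qed

lemma Ord_C: "C_ordering G Ord"
  unfolding C_ordering_def by (intro conjI O2 O3 O4 O5 O6) (simp add: Ord_def)

lemma Ord_convex: "convex_for G Ord K"
  unfolding convex_for_def
proof (intro ballI impI)
  fix f1 f2 h assume f: "f1 \<in> K" "f2 \<in> K" and hc: "h \<in> carrier G"
    and o: "(Ord f1 h \<and> f1 \<noteq> h) \<and> (Ord h f2 \<and> h \<noteq> f2)"
  have fc: "f1 \<in> carrier G" "f2 \<in> carrier G" using f by (auto simp: K_def)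
  have p1: "P (inv f1 \<otimes> h)" using o unfolding Ord_def by blast
  have p2: "P (inv h \<otimes> f2)" using o unfolding Ord_def by blast
  show "h \<in> K"
  proof (rule ccontr)
    assume hK: "h \<notin> K"
    then obtain H where H: "mn h H" using mn_ex hc by blast
    have hH: "H \<in> Hs" using mnH[OF H] .
    have cA: "cvx G (Rs H) H" using cv[OF hH] .
    have oA: "corder G (Rs H)" using coH[OF hH] .
    have hn: "h \<notin> H" using H by (simp add: mn_def)
    have f1H: "f1 \<in> H" "f2 \<in> H" using f hH by (auto simp: inK)
    have if1: "inv f1 \<in> K" using subgroup.m_inv_closed[OF K_sub f(1)] .
    have m1: "mn (inv f1 \<otimes> h) H" using mn_left[OF if1 hc H] .
    have m2: "mn (inv h \<otimes> f2) H" using mn_right[OF f(2) _ mn_inv[OF hc H]] hc by simp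
    have q1: "slt (Rs H) \<one> (inv f1 \<otimes> h)" using p1 P_nK[OF _ m1] fc hc by simp
    have q2: "slt (Rs H) \<one> (inv h \<otimes> f2)" using p2 P_nK[OF _ m2] fc hc by simp
    have ihn: "inv f1 \<otimes> h \<notin> H" using m1 by (simp add: mn_def)
    have "slt (Rs H) \<one> (f1 \<otimes> (inv f1 \<otimes> h))"
      using cvx.left[OF cA _ ihn q1 f1H(1)] fc hc by simp
    then have s1: "slt (Rs H) \<one> h" using fc hc by (simp add: m_assoc[symmetric])
    have ihn2: "inv h \<otimes> f2 \<notin> H" using m2 by (simp add: mn_def)
    have "slt (Rs H) \<one> ((inv h \<otimes> f2) \<otimes> inv f2)"
      using cvx.right[OF cA _ ihn2 q2 subgroup.m_inv_closed[OF subH[OF hH] f1H(2)]] fc hc by simp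
    then have s2: "slt (Rs H) \<one> (inv h)" using fc hc by (simp add: m_assoc)
    have "slt (Rs H) (inv h) \<one>" using corder.neg_inv[OF oA hc s1] .
    then show False using corder.lt_asym[OF oA _ one_closed] s2 hc by blast
  qed
qed

end


theorem mainTheorem19:
  fixes G :: "('a, 'b) monoid_scheme" and \<H> :: "'a set set"
  assumes "group G"
    and "C_orderable G"
    and "\<forall>H\<in>\<H>. C_relatively_convex G H"
  shows "C_relatively_convex G (carrier G \<inter> \<Inter>\<H>)"
proof -
  have "\<forall>H\<in>\<H>. \<exists>R. C_ordering G R \<and> convex_for G R H \<and> subgroup H G"
    using assms(3) unfolding C_relatively_convex_def by blast
  then obtain Rs where Rs: "\<forall>H\<in>\<H>. C_ordering G (Rs H) \<and> convex_for G (Rs H) H \<and> subgroup H G"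
    by (metis (no_types))
  obtain R0 where R0: "C_ordering G R0" using assms(2) unfolding C_orderable_def by blast
  obtain W where W: "well_order_on \<H> W" using well_order_on by blast
  have Wt: "trans W" and Wa: "antisym W" and Wtot: "total_on \<H> W" and Wwf: "wf (W - Id)"
    using W unfolding well_order_on_def linear_order_on_def partial_order_on_def preorder_on_def
    by auto
  define lw where "lw a b \<longleftrightarrow> (a,b)\<in>W \<and> a\<noteq>b" for a b
  have ax: "comb G \<H> Rs R0 lw"
  proof (rule comb.intro[OF assms(1)], rule comb_axioms.intro)
    fix H assume h: "H \<in> \<H>"
    have co: "corder G (Rs H)" using corder.intro[OF assms(1) corder_axioms.intro] Rs h by blast
    show "cvx G (Rs H) H" using cvx.intro[OF co cvx_axioms.intro] Rs h by blast
  next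
    show "corder G R0" using corder.intro[OF assms(1) corder_axioms.intro[OF R0]] .
  next
    fix H show "\<not> lw H H" by (simp add: lw_def)
  next
    fix a b c assume ab: "lw a b" and bc: "lw b c"
    have "(a,c) \<in> W" using ab bc Wt unfolding lw_def by (meson transD)
    moreover have "a \<noteq> c"
    proof
      assume "a = c"
      then have "(a,b) \<in> W" "(b,a) \<in> W" using ab bc unfolding lw_def by auto
      then have "a = b" using Wa by (meson antisymD)
      then show False using ab unfolding lw_def by simp
    qed
    ultimately show "lw a c" by (simp add: lw_def)
  next
    fix a b assume "a \<in> \<H>" "b \<in> \<H>" "a \<noteq> b"
    then show "lw a b \<or> lw b a" using Wtot unfolding total_on_def lw_def by blast
  next
    fix S assume S: "S \<subseteq> \<H>" "S \<noteq> {}"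
    then obtain x where "x \<in> S" by blast
    then obtain z where z: "z \<in> S" "\<And>y. (y, z) \<in> W - Id \<Longrightarrow> y \<notin> S" using wfE_min[OF Wwf] by blast
    have "\<forall>s\<in>S. \<not> lw s z"
    proof
      fix s assume "s \<in> S"
      then show "\<not> lw s z" using z(2)[of s] unfolding lw_def by blast
    qed
    then show "\<exists>m\<in>S. \<forall>s\<in>S. \<not> lw s m" using z(1) by blast
  qed
  have "subgroup (comb.K G \<H>) G" using comb.K_sub[OF ax] .
  moreover have "C_ordering G (comb.Ord G \<H> Rs R0 lw)" using comb.Ord_C[OF ax] .
  moreover have "convex_for G (comb.Ord G \<H> Rs R0 lw) (comb.K G \<H>)" using comb.Ord_convex[OF ax] .
  moreover have "comb.K G \<H> = carrier G \<inter> \<Inter>\<H>" using comb.K_def[OF ax] .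
  ultimately show ?thesis unfolding C_relatively_convex_def by metis
qed

end
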